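(* If $X$ is a topological space and $Y\subseteq X$ (with the subspace topology), then $\mathfrak{s}(Y)\leq\mathfrak{s}(X)$.
   Context: For infinite sets $U, A$, say $U$ splits $A$ if both $A\cap U$ and $A\setminus U$ are infinite. For a topological space $X$, $\mathfrak{s}(X)$ is the smallest cardinality of a family $\mathcal{U}$ of open subsets of $X$ such that every infinite $A\subseteq X$ is split by some $U\in\mathcal{U}$. *)

theory Defs
  imports "HOL-Analysis.Analysis"
begin

definition splits :: "'a set \<Rightarrow> 'a set \<Rightarrow> bool" where
  "splits U A \<longleftrightarrow> infinite (A \<inter> U) \<and> infinite (A - U)"

text \<open>A family of open sets of X splitting every infinite subset of X.
  s(X) is the least cardinality of such a family.\<close>
definition splitting_family :: "'a topology \<Rightarrow> 'a set set \<Rightarrow> bool" where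
  "splitting_family X \<U> \<longleftrightarrow>
     (\<forall>U\<in>\<U>. openin X U) \<and>
     (\<forall>A. A \<subseteq> topspace X \<and> infinite A \<longrightarrow> (\<exists>U\<in>\<U>. splits U A))"

end

theory Submission
  imports Defs
begin

theorem lemma2p2:
  fixes X :: "'a topology" and Y :: "'a set" and \<U> :: "'a set set"
  assumes "Y \<subseteq> topspace X"
    and "splitting_family X \<U>"
  shows "\<exists>\<V>. splitting_family (subtopology X Y) \<V> \<and> (card_of \<V>, card_of \<U>) \<in> ordLeq"
proof (intro exI conjI)
  show "(card_of ((\<lambda>U. Y \<inter> U) ` \<U>), card_of \<U>) \<in> ordLeq"
    by (rule card_of_image)
  show "splitting_family (subtopology X Y) ((\<lambda>U. Y \<inter> U) ` \<U>)"
    unfolding splitting_family_def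
  proof (intro conjI allI impI ballI)
    fix V assume "V \<in> (\<lambda>U. Y \<inter> U) ` \<U>"
    then obtain U where "U \<in> \<U>" "V = Y \<inter> U" by blast
    then show "openin (subtopology X Y) V"
      using assms(2) unfolding splitting_family_def
      by (metis Int_commute openin_subtopology_Int2)
  next
    fix A assume A: "A \<subseteq> topspace (subtopology X Y) \<and> infinite A"
    then have "A \<subseteq> Y" "A \<subseteq> topspace X" by auto
    with A assms(2) obtain U where U: "U \<in> \<U>" "splits U A"
      unfolding splitting_family_def by blast
    have "A \<inter> (Y \<inter> U) = A \<inter> U" "A - (Y \<inter> U) = A - U" using \<open>A \<subseteq> Y\<close> by auto
    then have "splits (Y \<inter> U) A" using U(2) by (simp add: splits_def)
    then show "\<exists>V\<in>(\<lambda>U. Y \<inter> U) ` \<U>. splits V A" using U(1) by blast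
  qed
qed

end
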